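(* There is a constant $C_1$, independent of $n$ (it may depend on $N$, $\sigma$, $v_1,v_2$), such that for the chain started at time $0$ from an initial point $\mathbf{X}^0$ (possibly random with $\mathbb{E}|x_1^0|<\infty$, $\mathbb{E}|x_2^0|<\infty$), for all $n\ge0$, $$|\mathbb{E}x_1^n|\le|\mathbb{E}x_1^0|+C_1\|v_1\|_\infty,\qquad |\mathbb{E}x_2^n|\le|\mathbb{E}x_2^0|+C_1\|v_2\|_\infty.$$
   Context: Let $\sigma>0$. Let $v_1(t,x_2)$ and $v_2(t,x_1)$ be smooth real functions, $1$-periodic in each argument, with $\int_0^1 v_1(t,x_2)\,\mathrm{d}x_2=0$ and $\int_0^1 v_2(t,x_1)\,\mathrm{d}x_1=0$ for all $t$. Let $N\in\mathbb{N}$, $\Delta t=1/N$, $t_{n+\frac12}=(n+\frac12)\Delta t$. The numerical scheme generates the Markov chain $\mathbf{X}^n=(x_1^n,x_2^n)\in\mathbb{R}^2$ by $$x_1^{n+1}=x_1^n+v_1(t_{n+\frac12},x_2^n)\Delta t+\sigma\sqrt{\Delta t}\,\xi_1^n,\quad x_2^{n+1}=x_2^n+v_2\big(t_{n+\frac12},x_1^n+v_1(t_{n+\frac12},x_2^n)\Delta t\big)\Delta t+\sigma\sqrt{\Delta t}\,\xi_2^n,$$ where $\xi_1^n,\xi_2^n$ are i.i.d. $\mathcal{N}(0,1)$ independent of $\mathbf{X}^0$. *)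

theory Defs
  imports "HOL-Probability.Probability"
begin

text \<open>C-infinity smoothness of a real function of two real variables (t,x):
  it is continuous, both partial derivatives exist everywhere, and the partial
  derivatives are again smooth.  (Continuous partials of all orders.)\<close>
coinductive smooth2 :: "(real \<Rightarrow> real \<Rightarrow> real) \<Rightarrow> bool" where
  "\<lbrakk> continuous_on UNIV (\<lambda>p. f (fst p) (snd p));
     \<And>t x. ((\<lambda>s. f s x) has_real_derivative ft t x) (at t);
     \<And>t x. ((\<lambda>y. f t y) has_real_derivative fx t x) (at x);
     smooth2 ft; smooth2 fx \<rbrakk> \<Longrightarrow> smooth2 f"

definition supnorm2 :: "(real \<Rightarrow> real \<Rightarrow> real) \<Rightarrow> real" where
  "supnorm2 f = (SUP p\<in>(UNIV::(real\<times>real) set). \<bar>f (fst p) (snd p)\<bar>)"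

text \<open>The numerical scheme: given the initial point X0 and the noise sequence
  \<omega> n = (\<xi>_1^n, \<xi>_2^n), the state X^n.  Time step 1/N, t_{n+1/2} = (n+1/2)/N.\<close>
fun scheme :: "(real \<Rightarrow> real \<Rightarrow> real) \<Rightarrow> (real \<Rightarrow> real \<Rightarrow> real) \<Rightarrow> real \<Rightarrow> nat
    \<Rightarrow> real \<times> real \<Rightarrow> (nat \<Rightarrow> real \<times> real) \<Rightarrow> nat \<Rightarrow> real \<times> real" where
  "scheme v1 v2 \<sigma> N X0 \<omega> 0 = X0"
| "scheme v1 v2 \<sigma> N X0 \<omega> (Suc n) =
     (let (x1, x2) = scheme v1 v2 \<sigma> N X0 \<omega> n;
          dt = 1 / real N;
          t = (real n + 1/2) * dt;
          y1 = x1 + v1 t x2 * dt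
      in (y1 + \<sigma> * sqrt dt * fst (\<omega> n),
          x2 + v2 t y1 * dt + \<sigma> * sqrt dt * snd (\<omega> n)))"

definition gauss :: "real measure" where
  "gauss = density lborel std_normal_density"

definition noise_space :: "(nat \<Rightarrow> real \<times> real) measure" where
  "noise_space = PiM UNIV (\<lambda>_::nat. gauss \<Otimes>\<^sub>M gauss)"

definition chain_space :: "(real \<times> real) measure \<Rightarrow> ((real \<times> real) \<times> (nat \<Rightarrow> real \<times> real)) measure" where
  "chain_space \<mu> = \<mu> \<Otimes>\<^sub>M noise_space"

end

theory Submission
  imports Defs
begin


lemma prob_space_gauss: "prob_space gauss"
  unfolding gauss_def by (rule prob_space_normal_density) simp

lemma sets_gauss[simp, measurable_cong]: "sets gauss = sets borel"
  unfolding gauss_def by simp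

lemma integral_gauss:
  assumes [measurable]: "g \<in> borel_measurable borel"
  shows "(\<integral>x. g x \<partial>gauss) = (\<integral>x. std_normal_density x * g x \<partial>lborel)"
  unfolding gauss_def by (subst integral_density) (auto simp: normal_density_nonneg)

lemma integrable_gauss_iff:
  assumes [measurable]: "g \<in> borel_measurable borel"
  shows "integrable gauss g \<longleftrightarrow> integrable lborel (\<lambda>x. std_normal_density x * g x)"
  unfolding gauss_def by (subst integrable_density) (auto simp: normal_density_nonneg)

lemma gauss_x: "integrable gauss (\<lambda>x. x)" "(\<integral>x. x \<partial>gauss) = 0"
  using integrable_std_normal_moment[of 1] integral_std_normal_moment_odd[of 0]
  by (auto simp: integral_gauss integrable_gauss_iff)



definition U :: "real measure" where
  "U = density lborel (\<lambda>x. ennreal (indicator {0..<1} x))"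

lemma sets_U[simp, measurable_cong]: "sets U = sets borel"
  unfolding U_def by simp

lemma space_U[simp]: "space U = UNIV"
  unfolding U_def by simp

lemma integral_U:
  fixes g :: "real \<Rightarrow> real"
  assumes [measurable]: "g \<in> borel_measurable borel"
  shows "(\<integral>x. g x \<partial>U) = (\<integral>x. indicator {0..<1} x * g x \<partial>lborel)"
  unfolding U_def using integral_density[of g lborel "indicator {0..<1}"] by simp

lemma prob_space_U: "prob_space U"
proof
  have "emeasure U (space U) = emeasure lborel {0..<1::real}"
    unfolding U_def by (simp add: emeasure_density nn_integral_indicator ennreal_indicator)
  then show "emeasure U (space U) = 1" by simp
qed

lemma integrable_ind_bounded:
  fixes h :: "real \<Rightarrow> real"
  assumes [measurable]: "h \<in> borel_measurable borel" and B: "\<And>x. \<bar>h x\<bar> \<le> B"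
  shows "integrable lborel (\<lambda>x. indicator {a..<b} x * h x)"
proof (rule Bochner_Integration.integrable_bound)
  show "integrable lborel (\<lambda>x. B * indicator {a..<b} x)"
  proof -
    have "emeasure lborel {a..<b} < \<infinity>"
      by (cases "a \<le> b") (auto simp: ennreal_less_top)
    then show ?thesis by (intro integrable_mult_right integrable_real_indicator) auto
  qed
  show "AE x in lborel. norm (indicator {a..<b} x * h x) \<le> norm (B * indicator {a..<b} x)"
    using B by (auto simp: indicator_def abs_mult intro: order_trans[OF _ abs_ge_self])
qed auto

lemma periodic_int:
  fixes h :: "real \<Rightarrow> 'a"
  assumes "\<And>x. h (x + 1) = h x"
  shows "h (x + real_of_int k) = h x"
proof -
  have n: "h (y + real n) = h y" for y n
  proof (induction n)
    case (Suc n) then show ?case using assms[of "y + real n"] by (simp add: algebra_simps)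
  qed simp
  show ?thesis
  proof (cases "k \<ge> 0")
    case True then show ?thesis using n[of x "nat k"] by simp
  next
    case False
    have "h x = h (x + real_of_int k + real (nat (-k)))"
      using False by simp
    then show ?thesis using n[of "x + real_of_int k" "nat (-k)"] by simp
  qed
qed

lemma shift_U:
  fixes h :: "real \<Rightarrow> real"
  assumes [measurable]: "h \<in> borel_measurable borel" and B: "\<And>x. \<bar>h x\<bar> \<le> B"
    and per: "\<And>x. h (x + 1) = h x"
  shows "(\<integral>x. h (x + c) \<partial>U) = (\<integral>x. h x \<partial>U)"
proof -
  define r where "r = c - of_int \<lfloor>c\<rfloor>"
  have r: "0 \<le> r" "r < 1" unfolding r_def by linarith+
  have "(\<integral>x. h (x + c) \<partial>U) = (\<integral>x. h (x + r) \<partial>U)"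
    using periodic_int[of h, OF per, of "_ + r" "\<lfloor>c\<rfloor>"]
    by (intro Bochner_Integration.integral_cong) (auto simp: r_def algebra_simps)
  also have "\<dots> = (\<integral>x. indicator {0..<1} x * h (x + r) \<partial>lborel)"
    by (rule integral_U) simp
  also have "\<dots> = (\<integral>y. indicator {r..<1+r} y * h y \<partial>lborel)"
    by (subst lborel_integral_real_affine[where c=1 and t=r])
       (auto simp: indicator_def algebra_simps intro!: Bochner_Integration.integral_cong)
  also have "\<dots> = (\<integral>y. indicator {r..<1} y * h y + indicator {1..<1+r} y * h y \<partial>lborel)"
    using r by (intro Bochner_Integration.integral_cong) (auto simp: indicator_def)
  also have "\<dots> = (\<integral>y. indicator {r..<1} y * h y \<partial>lborel) + (\<integral>y. indicator {1..<1+r} y * h y \<partial>lborel)"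
    by (intro Bochner_Integration.integral_add integrable_ind_bounded[OF _ B]) auto
  also have "(\<integral>y. indicator {1..<1+r} y * h y \<partial>lborel) = (\<integral>y. indicator {0..<r} y * h y \<partial>lborel)"
    by (subst lborel_integral_real_affine[where c=1 and t=1])
       (auto simp: indicator_def algebra_simps per intro!: Bochner_Integration.integral_cong)
  also have "(\<integral>y. indicator {r..<1} y * h y \<partial>lborel) + (\<integral>y. indicator {0..<r} y * h y \<partial>lborel)
      = (\<integral>y. indicator {r..<1} y * h y + indicator {0..<r} y * h y \<partial>lborel)"
    by (intro Bochner_Integration.integral_add[symmetric] integrable_ind_bounded[OF _ B]) auto
  also have "\<dots> = (\<integral>y. indicator {0..<1} y * h y \<partial>lborel)"
    using r by (intro Bochner_Integration.integral_cong) (auto simp: indicator_def)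
  also have "\<dots> = (\<integral>x. h x \<partial>U)"
    by (rule integral_U[symmetric]) simp
  finally show ?thesis .
qed



lemma snd_mono: "\<bar>a\<bar> \<le> b \<Longrightarrow> std_normal_density b \<le> std_normal_density a"
proof -
  assume "\<bar>a\<bar> \<le> b"
  then have "a^2 \<le> b^2" by (metis abs_le_square_iff abs_of_nonneg abs_ge_zero order_trans)
  then have "exp (-(b^2/2)) \<le> exp (-(a^2/2))" by simp
  then show ?thesis unfolding std_normal_density_def by (simp add: divide_right_mono)
qed

lemma integrable_gauss_bounded:
  fixes h :: "real \<Rightarrow> real"
  assumes [measurable]: "h \<in> borel_measurable borel" and B: "\<And>x. \<bar>h x\<bar> \<le> B"
  shows "integrable gauss h"
proof -
  interpret prob_space gauss by (rule prob_space_gauss)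
  show ?thesis using B by (intro integrable_const_bound[where B=B]) auto
qed

lemma ind_shift_int:
  fixes g :: "real \<Rightarrow> real"
  assumes [measurable]: "g \<in> borel_measurable borel" and per: "\<And>x. g (x + 1) = g x"
  shows "(\<integral>y. indicator {real_of_int k..<real_of_int k+1} y * g y \<partial>lborel) = (\<integral>x. g x \<partial>U)"
proof -
  have "(\<integral>y. indicator {real_of_int k..<real_of_int k+1} y * g y \<partial>lborel)
     = (\<integral>x. indicator {0..<1} x * g x \<partial>lborel)"
    using periodic_int[of g, OF per, of _ k]
    by (subst lborel_integral_real_affine[where c=1 and t="real_of_int k"])
       (auto simp: indicator_def algebra_simps intro!: Bochner_Integration.integral_cong)
  then show ?thesis by (simp add: integral_U)
qed

lemma minor1:
  fixes g :: "real \<Rightarrow> real"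
  assumes [measurable]: "g \<in> borel_measurable borel" and B: "\<And>x. 0 \<le> g x" "\<And>x. g x \<le> B"
    and per: "\<And>x. g (x + 1) = g x" and s: "s > 0"
  shows "std_normal_density (1/s) / s * (\<integral>x. g x \<partial>U) \<le> (\<integral>a. g (u + s * a) \<partial>gauss)"
proof -
  define k where "k = \<lfloor>u\<rfloor>"
  define I where "I = {(real_of_int k - u)/s..<(real_of_int k + 1 - u)/s}"
  have gb: "\<bar>g x\<bar> \<le> B" for x using B[of x] by simp
  have "(\<integral>x. g x \<partial>U) = (\<integral>y. indicator {real_of_int k..<real_of_int k+1} y * g y \<partial>lborel)"
    by (rule ind_shift_int[symmetric]) (auto simp: per)
  also have "\<dots> = s * (\<integral>a. indicator I a * g (u + s * a) \<partial>lborel)"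
    using s
    by (subst lborel_integral_real_affine[where c=s and t=u])
       (auto simp: indicator_def I_def field_simps intro!: Bochner_Integration.integral_cong)
  finally have eq0: "(\<integral>x. g x \<partial>U) = s * (\<integral>a. indicator I a * g (u + s * a) \<partial>lborel)" .
  have "std_normal_density (1/s) / s * (\<integral>x. g x \<partial>U) =
      (\<integral>a. indicator I a * (std_normal_density (1/s) * g (u + s * a)) \<partial>lborel)"
  proof -
    have "(\<integral>a. indicator I a * (std_normal_density (1/s) * g (u + s * a)) \<partial>lborel)
      = std_normal_density (1/s) * (\<integral>a. indicator I a * g (u + s * a) \<partial>lborel)"
      by (subst integral_mult_right_zero[symmetric]) (simp add: ac_simps)
    then show ?thesis using s eq0 by (simp add: field_simps)
  qed
  also have "\<dots> \<le> (\<integral>a. std_normal_density a * g (u + s * a) \<partial>lborel)"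
  proof (rule integral_mono)
    show "integrable lborel (\<lambda>a. indicator I a * (std_normal_density (1 / s) * g (u + s * a)))"
      unfolding I_def
      by (rule integrable_ind_bounded[where B="std_normal_density (1/s) * B"])
         (auto simp: abs_mult gb intro!: mult_left_mono)
    show "integrable lborel (\<lambda>a. std_normal_density a * g (u + s * a))"
    proof (rule Bochner_Integration.integrable_bound)
      show "integrable lborel (\<lambda>a. B * std_normal_density a)" by auto
      show "AE x in lborel. norm (std_normal_density x * g (u + s * x)) \<le> norm (B * std_normal_density x)"
      proof (rule AE_I2)
        fix x
        have "std_normal_density x * g (u + s * x) \<le> std_normal_density x * B"
          using B by (intro mult_left_mono) (auto simp: normal_density_nonneg)
        then show "norm (std_normal_density x * g (u + s * x)) \<le> norm (B * std_normal_density x)"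
          using B[of 0] B(1)[of "u + s * x"] by (auto simp: abs_mult normal_density_nonneg mult.commute)
      qed
    qed auto
    fix a
    show "indicator I a * (std_normal_density (1 / s) * g (u + s * a)) \<le> std_normal_density a * g (u + s * a)"
    proof (cases "a \<in> I")
      case True
      have k: "real_of_int k \<le> u" "u < real_of_int k + 1" unfolding k_def by linarith+
      from True s have "real_of_int k \<le> u + s * a" "u + s * a < real_of_int k + 1"
        unfolding I_def by (auto simp: field_simps)
      with k have "\<bar>s * a\<bar> \<le> 1" by linarith
      with s have "\<bar>a\<bar> \<le> 1/s" by (auto simp: field_simps abs_mult)
      then show ?thesis using True B by (auto intro!: mult_right_mono snd_mono)
    qed (auto simp: B normal_density_nonneg)
  qed
  also have "\<dots> = (\<integral>a. g (u + s * a) \<partial>gauss)"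
    by (rule integral_gauss[symmetric]) simp
  finally show ?thesis .
qed



interpretation U: prob_space U by (rule prob_space_U)
interpretation G: prob_space gauss by (rule prob_space_gauss)
interpretation UU: pair_prob_space U U by unfold_locales
interpretation UG: pair_prob_space U gauss by unfold_locales

lemma prob_U_UNIV[simp]: "U.prob UNIV = 1" using U.prob_space by simp
lemma space_gauss[simp]: "space gauss = UNIV" unfolding gauss_def by simp
lemma prob_G_UNIV[simp]: "G.prob UNIV = 1" using G.prob_space by simp

lemma (in prob_space) ibound:
  fixes F :: "'a \<Rightarrow> real"
  assumes [measurable]: "F \<in> borel_measurable M" and B: "\<And>x. x \<in> space M \<Longrightarrow> \<bar>F x\<bar> \<le> B"
  shows "integrable M F" "\<bar>\<integral>x. F x \<partial>M\<bar> \<le> B"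
proof -
  show int: "integrable M F" using B by (intro integrable_const_bound[where B=B]) auto
  have "\<bar>\<integral>x. F x \<partial>M\<bar> \<le> (\<integral>x. \<bar>F x\<bar> \<partial>M)" by (rule integral_abs_bound)
  also have "\<dots> \<le> (\<integral>x. B \<partial>M)"
    using int B by (intro integral_mono_AE) (auto intro!: AE_I2)
  also have "\<dots> = B" by (simp add: prob_space)
  finally show "\<bar>\<integral>x. F x \<partial>M\<bar> \<le> B" .
qed

definition good :: "real \<Rightarrow> (real \<times> real \<Rightarrow> real) \<Rightarrow> bool" where
  "good B f \<longleftrightarrow> f \<in> borel_measurable (borel \<Otimes>\<^sub>M borel) \<and> (\<forall>x1 x2. f (x1 + 1, x2) = f (x1, x2))
     \<and> (\<forall>x1 x2. f (x1, x2 + 1) = f (x1, x2)) \<and> (\<forall>x. \<bar>f x\<bar> \<le> B)"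

definition mean :: "(real \<times> real \<Rightarrow> real) \<Rightarrow> real" where
  "mean f = (\<integral>x2. (\<integral>x1. f (x1, x2) \<partial>U) \<partial>U)"

definition N1 :: "real \<Rightarrow> (real \<times> real \<Rightarrow> real) \<Rightarrow> real \<times> real \<Rightarrow> real" where
  "N1 s f x = (\<integral>a. f (fst x + s * a, snd x) \<partial>gauss)"

definition N2 :: "real \<Rightarrow> (real \<times> real \<Rightarrow> real) \<Rightarrow> real \<times> real \<Rightarrow> real" where
  "N2 s f x = (\<integral>b. f (fst x, snd x + s * b) \<partial>gauss)"

lemma goodD:
  assumes "good B f"
  shows "f \<in> borel_measurable (borel \<Otimes>\<^sub>M borel)" "\<And>x1 x2. f (x1 + 1, x2) = f (x1, x2)"
    "\<And>x1 x2. f (x1, x2 + 1) = f (x1, x2)" "\<And>x. \<bar>f x\<bar> \<le> B"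
  using assms unfolding good_def by auto

lemma mean_swap:
  assumes "good B f"
  shows "mean f = (\<integral>x1. (\<integral>x2. f (x1, x2) \<partial>U) \<partial>U)"
proof -
  note g = goodD[OF assms]
  have [measurable]: "f \<in> borel_measurable (U \<Otimes>\<^sub>M U)"
    using g(1) by (simp cong: measurable_cong_sets)
  have "integrable (U \<Otimes>\<^sub>M U) (case_prod (\<lambda>x1 x2. f (x1, x2)))"
    using g(4) by (intro UU.ibound(1)[where B=B]) auto
  from UU.Fubini_integral[OF this] show ?thesis unfolding mean_def by simp
qed

lemma mean_lin:
  assumes "good B f"
  shows "mean (\<lambda>x. a + c * f x) = a + c * mean f"
proof -
  note g = goodD[OF assms]
  have [measurable]: "f \<in> borel_measurable (borel \<Otimes>\<^sub>M borel)" by (rule g(1))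
  have i1: "integrable U (\<lambda>x1. f (x1, x2))" for x2
    using g(4) by (intro U.ibound(1)[where B=B]) auto
  have m2[measurable]: "(\<lambda>x2. \<integral>x1. f (x1, x2) \<partial>U) \<in> borel_measurable borel"
    by measurable
  have i2: "integrable U (\<lambda>x2. \<integral>x1. f (x1, x2) \<partial>U)"
    using g(4) i1 by (intro U.ibound(1)[where B=B] U.ibound(2)) auto
  have "mean (\<lambda>x. a + c * f x) = (\<integral>x2. a + c * (\<integral>x1. f (x1, x2) \<partial>U) \<partial>U)"
    unfolding mean_def using i1 by (intro Bochner_Integration.integral_cong) auto
  also have "\<dots> = a + c * mean f"
    unfolding mean_def using i2 by simp
  finally show ?thesis .
qed



lemma good_N1:
  assumes "good B f" shows "good B (N1 s f)"
proof -
  note g = goodD[OF assms]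
  have [measurable]: "f \<in> borel_measurable (borel \<Otimes>\<^sub>M borel)" by (rule g(1))
  have "N1 s f \<in> borel_measurable (borel \<Otimes>\<^sub>M borel)" unfolding N1_def by measurable
  moreover have "N1 s f (x1 + 1, x2) = N1 s f (x1, x2)" for x1 x2
    unfolding N1_def using g(2)[of "x1 + s * _" x2]
    by (intro Bochner_Integration.integral_cong) (auto simp: algebra_simps)
  moreover have "N1 s f (x1, x2 + 1) = N1 s f (x1, x2)" for x1 x2
    unfolding N1_def using g(3) by simp
  moreover have "\<bar>N1 s f x\<bar> \<le> B" for x
    unfolding N1_def using g(4) by (intro G.ibound(2)) auto
  ultimately show ?thesis unfolding good_def by auto
qed

lemma good_N2:
  assumes "good B f" shows "good B (N2 s f)"
proof -
  note g = goodD[OF assms]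
  have [measurable]: "f \<in> borel_measurable (borel \<Otimes>\<^sub>M borel)" by (rule g(1))
  have "N2 s f \<in> borel_measurable (borel \<Otimes>\<^sub>M borel)" unfolding N2_def by measurable
  moreover have "N2 s f (x1, x2 + 1) = N2 s f (x1, x2)" for x1 x2
    unfolding N2_def using g(3)[of x1 "x2 + s * _"]
    by (intro Bochner_Integration.integral_cong) (auto simp: algebra_simps)
  moreover have "N2 s f (x1 + 1, x2) = N2 s f (x1, x2)" for x1 x2
    unfolding N2_def using g(2) by simp
  moreover have "\<bar>N2 s f x\<bar> \<le> B" for x
    unfolding N2_def using g(4) by (intro G.ibound(2)) auto
  ultimately show ?thesis unfolding good_def by auto
qed

lemma inner_shift:
  fixes h :: "real \<Rightarrow> real" and B :: real
  assumes [measurable]: "h \<in> borel_measurable borel" and B: "\<And>x. \<bar>h x\<bar> \<le> B"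
    and per: "\<And>x. h (x + 1) = h x"
  shows "(\<integral>x. (\<integral>a. h (x + s * a) \<partial>gauss) \<partial>U) = (\<integral>x. h x \<partial>U)"
proof -
  have "integrable (U \<Otimes>\<^sub>M gauss) (case_prod (\<lambda>x a. h (x + s * a)))"
    using B by (intro UG.ibound(1)[where B=B]) auto
  from UG.Fubini_integral[OF this]
  have "(\<integral>x. (\<integral>a. h (x + s * a) \<partial>gauss) \<partial>U) = (\<integral>a. (\<integral>x. h (x + s * a) \<partial>U) \<partial>gauss)" by simp
  also have "\<dots> = (\<integral>a. (\<integral>x. h x \<partial>U) \<partial>gauss)"
    using shift_U[OF assms(1) B per] by simp
  also have "\<dots> = (\<integral>x. h x \<partial>U)" by simp
  finally show ?thesis .
qed

lemma mean_N1:
  assumes "good B f" shows "mean (N1 s f) = mean f"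
proof -
  note g = goodD[OF assms]
  have [measurable]: "f \<in> borel_measurable (borel \<Otimes>\<^sub>M borel)" by (rule g(1))
  show ?thesis unfolding mean_def N1_def
  proof (rule Bochner_Integration.integral_cong[OF refl])
    fix x2
    show "(\<integral>x1. (\<integral>a. f (fst (x1, x2) + s * a, snd (x1, x2)) \<partial>gauss) \<partial>U) = (\<integral>x1. f (x1, x2) \<partial>U)"
      using inner_shift[of "\<lambda>x1. f (x1, x2)" B s] g(2,4) by simp
  qed
qed

lemma mean_N2:
  assumes "good B f" shows "mean (N2 s f) = mean f"
proof -
  note g = goodD[OF assms]
  have [measurable]: "f \<in> borel_measurable (borel \<Otimes>\<^sub>M borel)" by (rule g(1))
  have "mean (N2 s f) = (\<integral>x1. (\<integral>x2. N2 s f (x1, x2) \<partial>U) \<partial>U)"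
    by (rule mean_swap[OF good_N2[OF assms]])
  also have "\<dots> = (\<integral>x1. (\<integral>x2. f (x1, x2) \<partial>U) \<partial>U)"
    unfolding N2_def
  proof (rule Bochner_Integration.integral_cong[OF refl])
    fix x1
    show "(\<integral>x2. (\<integral>b. f (fst (x1, x2), snd (x1, x2) + s * b) \<partial>gauss) \<partial>U) = (\<integral>x2. f (x1, x2) \<partial>U)"
      using inner_shift[of "\<lambda>x2. f (x1, x2)" B s] g(3,4) by simp
  qed
  also have "\<dots> = mean f" by (rule mean_swap[OF assms, symmetric])
  finally show ?thesis .
qed

lemma minor2:
  assumes "good B f" and nn: "\<And>x. 0 \<le> f x" and s: "s > 0"
  shows "(std_normal_density (1/s) / s)^2 * mean f \<le> N1 s (N2 s f) z"
proof -
  note g = goodD[OF assms(1)]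
  have [measurable]: "f \<in> borel_measurable (borel \<Otimes>\<^sub>M borel)" by (rule g(1))
  define c where "c = std_normal_density (1/s) / s"
  have c: "c \<ge> 0" unfolding c_def using s by (simp add: normal_density_nonneg)
  define G where "G y = (\<integral>x2. f (y, x2) \<partial>U)" for y
  have Gm[measurable]: "G \<in> borel_measurable borel" unfolding G_def by measurable
  have Gnn: "0 \<le> G y" for y unfolding G_def using nn by simp
  have GB: "G y \<le> B" for y unfolding G_def using g(4) U.ibound(2)[of "\<lambda>x2. f (y, x2)" B]
    by auto
  have Gper: "G (y + 1) = G y" for y unfolding G_def using g(2) by simp
  have fb: "f x \<le> B" for x using g(4)[of x] by simp
  have N2ge: "c * G y \<le> N2 s f (y, w)" for y w
    unfolding c_def G_def N2_def using minor1[of "\<lambda>x2. f (y, x2)" B s w] nn fb g(3) s by auto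
  note gN2 = good_N2[OF assms(1), of s]
  note g2 = goodD[OF gN2]
  have [measurable]: "N2 s f \<in> borel_measurable (borel \<Otimes>\<^sub>M borel)" by (rule g2(1))
  have "c * c * mean f = c * (c * (\<integral>y. G y \<partial>U))"
    unfolding mean_swap[OF assms(1)] G_def by simp
  also have "\<dots> \<le> c * (\<integral>a. G (fst z + s * a) \<partial>gauss)"
    using minor1[OF Gm Gnn GB Gper s, of "fst z"] c unfolding c_def[symmetric] by (intro mult_left_mono) auto
  also have "\<dots> = (\<integral>a. c * G (fst z + s * a) \<partial>gauss)" by simp
  also have "\<dots> \<le> (\<integral>a. N2 s f (fst z + s * a, snd z) \<partial>gauss)"
  proof (rule integral_mono)
    show "integrable gauss (\<lambda>a. c * G (fst z + s * a))"
      using Gnn GB c by (intro G.ibound(1)[where B="c * B"]) (auto simp: abs_mult intro!: mult_left_mono)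
    show "integrable gauss (\<lambda>a. N2 s f (fst z + s * a, snd z))"
      using g2(4) by (intro G.ibound(1)[where B=B]) auto
  qed (rule N2ge)
  also have "\<dots> = N1 s (N2 s f) z" unfolding N1_def by simp
  finally show ?thesis unfolding c_def by (simp add: power2_eq_square)
qed



lemma good_lin:
  assumes "good B f" shows "good (\<bar>a\<bar> + \<bar>b\<bar> * B) (\<lambda>x. a + b * f x)"
proof -
  note g = goodD[OF assms]
  have [measurable]: "f \<in> borel_measurable (borel \<Otimes>\<^sub>M borel)" by (rule g(1))
  have "\<bar>a + b * f x\<bar> \<le> \<bar>a\<bar> + \<bar>b\<bar> * B" for x
    using g(4)[of x] by (auto simp: abs_mult intro!: order_trans[OF abs_triangle_ineq] mult_left_mono)
  then show ?thesis unfolding good_def using g by auto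
qed

lemma N_lin:
  assumes "good B f"
  shows "N1 s (N2 s (\<lambda>x. a + b * f x)) z = a + b * N1 s (N2 s f) z"
proof -
  note g = goodD[OF assms]
  have [measurable]: "f \<in> borel_measurable (borel \<Otimes>\<^sub>M borel)" by (rule g(1))
  have int2: "integrable gauss (\<lambda>c. f (x1, x2 + s * c))" for x1 x2
    using g(4) by (intro G.ibound(1)[where B=B]) auto
  have e2: "N2 s (\<lambda>x. a + b * f x) = (\<lambda>x. a + b * N2 s f x)"
    unfolding N2_def using int2 by (auto simp: fun_eq_iff)
  note g2 = goodD[OF good_N2[OF assms, of s]]
  have [measurable]: "N2 s f \<in> borel_measurable (borel \<Otimes>\<^sub>M borel)" by (rule g2(1))
  have int1: "integrable gauss (\<lambda>c. N2 s f (x1 + s * c, x2))" for x1 x2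
    using g2(4) by (intro G.ibound(1)[where B=B]) auto
  show ?thesis unfolding e2 unfolding N1_def using int1 by simp
qed

locale schemeL =
  fixes v1 v2 :: "real \<Rightarrow> real \<Rightarrow> real" and dt s V1 V2 :: real
  assumes dt: "dt > 0" and s: "s > 0"
    and v1m: "\<And>t. v1 t \<in> borel_measurable borel" and v2m: "\<And>t. v2 t \<in> borel_measurable borel"
    and v1per: "\<And>t x. v1 t (x + 1) = v1 t x" and v2per: "\<And>t x. v2 t (x + 1) = v2 t x"
    and v1b: "\<And>t x. \<bar>v1 t x\<bar> \<le> V1" and v2b: "\<And>t x. \<bar>v2 t x\<bar> \<le> V2"
    and v1mean: "\<And>t. (\<integral>x. v1 t x \<partial>U) = 0" and v2mean: "\<And>t. (\<integral>x. v2 t x \<partial>U) = 0"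
begin

declare v1m[measurable] v2m[measurable]

definition S1 :: "real \<Rightarrow> real \<times> real \<Rightarrow> real \<times> real" where
  "S1 t x = (fst x + v1 t (snd x) * dt, snd x)"
definition S2 :: "real \<Rightarrow> real \<times> real \<Rightarrow> real \<times> real" where
  "S2 t x = (fst x, snd x + v2 t (fst x) * dt)"
definition step :: "real \<Rightarrow> real \<times> real \<Rightarrow> real \<times> real \<Rightarrow> real \<times> real" where
  "step t x w = (fst (S2 t (S1 t x)) + s * fst w, snd (S2 t (S1 t x)) + s * snd w)"
definition P :: "real \<Rightarrow> (real \<times> real \<Rightarrow> real) \<Rightarrow> real \<times> real \<Rightarrow> real" where
  "P t f x = (\<integral>w. f (step t x w) \<partial>(gauss \<Otimes>\<^sub>M gauss))"

lemma S1_meas[measurable]: "S1 t \<in> measurable (borel \<Otimes>\<^sub>M borel) (borel \<Otimes>\<^sub>M borel)"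
  unfolding S1_def by measurable
lemma S2_meas[measurable]: "S2 t \<in> measurable (borel \<Otimes>\<^sub>M borel) (borel \<Otimes>\<^sub>M borel)"
  unfolding S2_def by measurable

lemma good_S1: assumes "good B f" shows "good B (\<lambda>x. f (S1 t x))"
proof -
  note g = goodD[OF assms]
  have [measurable]: "f \<in> borel_measurable (borel \<Otimes>\<^sub>M borel)" by (rule g(1))
  have "f (x1 + 1 + v1 t x2 * dt, x2) = f (x1 + v1 t x2 * dt, x2)" for x1 x2
    using g(2)[of "x1 + v1 t x2 * dt" x2] by (simp add: algebra_simps)
  then show ?thesis unfolding good_def S1_def using g by (auto simp: v1per)
qed

lemma good_S2: assumes "good B f" shows "good B (\<lambda>x. f (S2 t x))"
proof -
  note g = goodD[OF assms]
  have [measurable]: "f \<in> borel_measurable (borel \<Otimes>\<^sub>M borel)" by (rule g(1))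
  have "f (x1, x2 + 1 + v2 t x1 * dt) = f (x1, x2 + v2 t x1 * dt)" for x1 x2
    using g(3)[of x1 "x2 + v2 t x1 * dt"] by (simp add: algebra_simps)
  then show ?thesis unfolding good_def S2_def using g by (auto simp: v2per)
qed

lemma mean_S1: assumes "good B f" shows "mean (\<lambda>x. f (S1 t x)) = mean f"
proof -
  note g = goodD[OF assms]
  have [measurable]: "f \<in> borel_measurable (borel \<Otimes>\<^sub>M borel)" by (rule g(1))
  show ?thesis unfolding mean_def S1_def
    using shift_U[of "\<lambda>x1. f (x1, _)" B "v1 t _ * dt"] g(2,4) by simp
qed

lemma mean_S2: assumes "good B f" shows "mean (\<lambda>x. f (S2 t x)) = mean f"
proof -
  note g = goodD[OF assms]
  have [measurable]: "f \<in> borel_measurable (borel \<Otimes>\<^sub>M borel)" by (rule g(1))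
  have "mean (\<lambda>x. f (S2 t x)) = (\<integral>x1. (\<integral>x2. f (S2 t (x1, x2)) \<partial>U) \<partial>U)"
    by (rule mean_swap[OF good_S2[OF assms]])
  also have "\<dots> = (\<integral>x1. (\<integral>x2. f (x1, x2) \<partial>U) \<partial>U)"
    unfolding S2_def using shift_U[of "\<lambda>x2. f (_, x2)" B "v2 t _ * dt"] g(3,4) by simp
  also have "\<dots> = mean f" by (rule mean_swap[OF assms, symmetric])
  finally show ?thesis .
qed

lemma P_eq: assumes "good B f" shows "P t f x = N1 s (N2 s f) (S2 t (S1 t x))"
proof -
  note g = goodD[OF assms]
  have [measurable]: "f \<in> borel_measurable (borel \<Otimes>\<^sub>M borel)" by (rule g(1))
  interpret GG: pair_prob_space gauss gauss by unfold_locales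
  have "integrable (gauss \<Otimes>\<^sub>M gauss) (\<lambda>w. f (step t x w))"
    using g(4) by (intro GG.ibound(1)[where B=B]) (auto simp: step_def)
  from GG.integral_fst'[OF this] show ?thesis
    unfolding P_def N1_def N2_def step_def by simp
qed

lemma good_P: assumes "good B f" shows "good B (P t f)"
proof -
  have "P t f = (\<lambda>x. N1 s (N2 s f) (S2 t (S1 t x)))" using P_eq[OF assms] by auto
  then show ?thesis using good_S1[OF good_S2[OF good_N1[OF good_N2[OF assms]]]] by simp
qed

lemma mean_P: assumes "good B f" shows "mean (P t f) = mean f"
proof -
  have "P t f = (\<lambda>x. N1 s (N2 s f) (S2 t (S1 t x)))" using P_eq[OF assms] by auto
  then show ?thesis
    using mean_S1[OF good_S2[OF good_N1[OF good_N2[OF assms]]]]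
      mean_S2[OF good_N1[OF good_N2[OF assms]]] mean_N1[OF good_N2[OF assms]] mean_N2[OF assms]
    by simp
qed

definition c :: real where "c = min ((std_normal_density (1/s) / s)^2) (1/2)"
definition q :: real where "q = 1 - c"

lemma c_pos: "0 < c" "c \<le> 1/2"
  unfolding c_def using s by (auto simp: std_normal_density_def)

lemma q_bounds: "0 \<le> q" "q < 1" unfolding q_def using c_pos by auto

lemma contract:
  assumes "good B f" "mean f = 0"
  shows "good (q * B) (P t f)"
proof -
  note g = goodD[OF assms(1)]
  have B: "0 \<le> B" using g(4)[of 0] by simp
  have fb: "-B \<le> f x \<and> f x \<le> B" for x using g(4)[of x] by auto
  have "\<bar>N1 s (N2 s f) z\<bar> \<le> q * B" for z
  proof -
    have gm: "good (B + B) (\<lambda>x. B + (-1) * f x)" using good_lin[OF assms(1), of B "-1"] B by simp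
    have "(std_normal_density (1/s) / s)^2 * mean (\<lambda>x. B + (-1) * f x) \<le> N1 s (N2 s (\<lambda>x. B + (-1) * f x)) z"
      by (intro minor2[OF gm _ s]) (smt (verit) fb)
    then have 1: "(std_normal_density (1/s) / s)^2 * B \<le> B - N1 s (N2 s f) z"
      using mean_lin[OF assms(1), of B "-1"] N_lin[OF assms(1), of s B "-1"] assms(2) by simp
    have gp: "good (B + B) (\<lambda>x. B + 1 * f x)" using good_lin[OF assms(1), of B "1"] B by simp
    have "(std_normal_density (1/s) / s)^2 * mean (\<lambda>x. B + 1 * f x) \<le> N1 s (N2 s (\<lambda>x. B + 1 * f x)) z"
      by (intro minor2[OF gp _ s]) (smt (verit) fb)
    then have 2: "(std_normal_density (1/s) / s)^2 * B \<le> B + N1 s (N2 s f) z"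
      using mean_lin[OF assms(1), of B "1"] N_lin[OF assms(1), of s B "1"] assms(2) by simp
    have "c * B \<le> (std_normal_density (1/s) / s)^2 * B"
      unfolding c_def using B by (intro mult_right_mono) auto
    with 1 2 show ?thesis unfolding q_def by (auto simp: algebra_simps abs_le_iff)
  qed
  then have "\<bar>P t f x\<bar> \<le> q * B" for x using P_eq[OF assms(1)] by simp
  then show ?thesis using good_P[OF assms(1)] unfolding good_def by auto
qed

end


interpretation GG: pair_prob_space gauss gauss by unfold_locales
interpretation Q: sequence_space "gauss \<Otimes>\<^sub>M gauss" by unfold_locales

lemma noise_space_eq: "noise_space = Q.S" unfolding noise_space_def by simp

lemma GG_snd: "distr (gauss \<Otimes>\<^sub>M gauss) gauss snd = gauss"
proof (intro measure_eqI)
  fix A assume A: "A \<in> sets (distr (gauss \<Otimes>\<^sub>M gauss) gauss snd)"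
  from A have "emeasure (distr (gauss \<Otimes>\<^sub>M gauss) gauss snd) A = emeasure (gauss \<Otimes>\<^sub>M gauss) (space gauss \<times> A)"
    by (auto simp add: emeasure_distr space_pair_measure dest: sets.sets_into_space intro!: arg_cong2[where f=emeasure])
  with A show "emeasure (distr (gauss \<Otimes>\<^sub>M gauss) gauss snd) A = emeasure gauss A"
    using G.emeasure_pair_measure_Times[of UNIV gauss A] by (simp add: G.emeasure_space_1[simplified])
qed simp

lemma GG_fst: "distr (gauss \<Otimes>\<^sub>M gauss) gauss fst = gauss" by (rule G.distr_pair_fst)
lemma S_comp: "distr Q.S (gauss \<Otimes>\<^sub>M gauss) (\<lambda>\<omega>. \<omega> k) = gauss \<Otimes>\<^sub>M gauss"
  by (rule Q.PiM_component) simp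

lemma noise_moments:
  "integrable Q.S (\<lambda>\<omega>. fst (\<omega> k))" "integrable Q.S (\<lambda>\<omega>. snd (\<omega> k))"
  "(\<integral>\<omega>. fst (\<omega> k) \<partial>Q.S) = 0" "(\<integral>\<omega>. snd (\<omega> k) \<partial>Q.S) = 0"
proof -
  have i: "integrable gauss (\<lambda>x. x)" "(\<integral>x. x \<partial>gauss) = 0" by (rule gauss_x)+
  have "integrable (gauss \<Otimes>\<^sub>M gauss) fst" "integrable (gauss \<Otimes>\<^sub>M gauss) snd"
    using i(1) integrable_distr_eq[of fst "gauss \<Otimes>\<^sub>M gauss" gauss "\<lambda>x. x"]
      integrable_distr_eq[of snd "gauss \<Otimes>\<^sub>M gauss" gauss "\<lambda>x. x"] by (simp_all add: GG_fst GG_snd)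
  moreover have "(\<integral>w. fst w \<partial>(gauss \<Otimes>\<^sub>M gauss)) = 0" "(\<integral>w. snd w \<partial>(gauss \<Otimes>\<^sub>M gauss)) = 0"
    using i(2) integral_distr[of fst "gauss \<Otimes>\<^sub>M gauss" gauss "\<lambda>x. x"]
      integral_distr[of snd "gauss \<Otimes>\<^sub>M gauss" gauss "\<lambda>x. x"] by (simp_all add: GG_fst GG_snd)
  ultimately show "integrable Q.S (\<lambda>\<omega>. fst (\<omega> k))" "integrable Q.S (\<lambda>\<omega>. snd (\<omega> k))"
    "(\<integral>\<omega>. fst (\<omega> k) \<partial>Q.S) = 0" "(\<integral>\<omega>. snd (\<omega> k) \<partial>Q.S) = 0"
    using integrable_distr_eq[of "\<lambda>\<omega>. \<omega> k" Q.S "gauss \<Otimes>\<^sub>M gauss" fst]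
      integrable_distr_eq[of "\<lambda>\<omega>. \<omega> k" Q.S "gauss \<Otimes>\<^sub>M gauss" snd]
      integral_distr[of "\<lambda>\<omega>. \<omega> k" Q.S "gauss \<Otimes>\<^sub>M gauss" fst]
      integral_distr[of "\<lambda>\<omega>. \<omega> k" Q.S "gauss \<Otimes>\<^sub>M gauss" snd]
    by (simp_all add: S_comp)
qed



context schemeL begin

definition tt :: "nat \<Rightarrow> real" where "tt j = (real j + 1/2) * dt"

fun H :: "nat \<Rightarrow> nat \<Rightarrow> (real \<times> real \<Rightarrow> real) \<Rightarrow> real \<times> real \<Rightarrow> real" where
  "H j 0 f = f"
| "H j (Suc n) f = P (tt j) (H (Suc j) n f)"

lemma H_contract:
  assumes "good B f" "mean f = 0"
  shows "good (q^n * B) (H j n f) \<and> mean (H j n f) = 0"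
  using assms
proof (induction n arbitrary: j B)
  case 0 then show ?case by simp
next
  case (Suc n)
  then have "good (q^n * B) (H (Suc j) n f)" "mean (H (Suc j) n f) = 0" by auto
  from contract[OF this] mean_P[OF this(1)] this(2) show ?case by (simp add: ac_simps)
qed

lemma good_H: "good B f \<Longrightarrow> good B (H j n f)"
  by (induction n arbitrary: j) (auto intro: good_P)

fun gs :: "nat \<Rightarrow> real \<times> real \<Rightarrow> (nat \<Rightarrow> real \<times> real) \<Rightarrow> nat \<Rightarrow> real \<times> real" where
  "gs j X0 \<omega> 0 = X0"
| "gs j X0 \<omega> (Suc n) = step (tt (j + n)) (gs j X0 \<omega> n) (\<omega> n)"

lemma gs_first: "gs j X0 \<omega> (Suc n) = gs (Suc j) (step (tt j) X0 (\<omega> 0)) (\<lambda>i. \<omega> (Suc i)) n"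
  by (induction n) auto

lemma step_meas[measurable (raw)]:
  assumes [measurable]: "f \<in> measurable M (borel \<Otimes>\<^sub>M borel)" "g \<in> measurable M (borel \<Otimes>\<^sub>M borel)"
  shows "(\<lambda>x. step t (f x) (g x)) \<in> measurable M (borel \<Otimes>\<^sub>M borel)"
  unfolding step_def S1_def S2_def by measurable

lemma gs_meas_joint[measurable]:
  "(\<lambda>p. gs j (fst p) (snd p) n) \<in> measurable ((borel \<Otimes>\<^sub>M borel) \<Otimes>\<^sub>M Q.S) (borel \<Otimes>\<^sub>M borel)"
proof (induction n)
  case (Suc n)
  have [measurable]: "(\<lambda>p. snd p n) \<in> measurable ((borel \<Otimes>\<^sub>M borel) \<Otimes>\<^sub>M Q.S) (borel \<Otimes>\<^sub>M borel)"
    by measurable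
  from Suc show ?case by simp
qed simp

lemma gs_meas_raw[measurable (raw)]:
  assumes [measurable]: "f \<in> measurable M (borel \<Otimes>\<^sub>M borel)" "g \<in> measurable M Q.S"
  shows "(\<lambda>x. gs j (f x) (g x) n) \<in> measurable M (borel \<Otimes>\<^sub>M borel)"
  using measurable_compose[OF measurable_Pair[OF assms] gs_meas_joint[of j n]] by simp

lemma gs_meas[measurable]: "(\<lambda>\<omega>. gs j X0 \<omega> n) \<in> measurable Q.S (borel \<Otimes>\<^sub>M borel)"
proof (induction n)
  case (Suc n)
  have [measurable]: "(\<lambda>\<omega>. \<omega> n) \<in> measurable Q.S (borel \<Otimes>\<^sub>M borel)"
    by measurable
  from Suc show ?case by simp
qed (simp add: measurable_const space_pair_measure)

end


lemma prob_space_S: "prob_space Q.S" by (rule prob_space_PiM) (simp add: GG.P.prob_space_axioms)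
lemma prob_S[simp]: "measure Q.S (space Q.S) = 1" using Q.P.prob_space .

interpretation MS: pair_prob_space "gauss \<Otimes>\<^sub>M gauss" Q.S by unfold_locales

lemma cm_meas[measurable]: "(\<lambda>p. case_nat (fst p) (snd p)) \<in> measurable ((gauss \<Otimes>\<^sub>M gauss) \<Otimes>\<^sub>M Q.S) Q.S"
  by measurable

context schemeL begin

lemma E_H:
  assumes "good B f"
  shows "(\<integral>\<omega>. f (gs j X0 \<omega> n) \<partial>Q.S) = H j n f X0"
proof (induction n arbitrary: j X0)
  case 0 then show ?case by simp
next
  case (Suc n)
  note g = goodD[OF assms]
  have [measurable]: "f \<in> borel_measurable (borel \<Otimes>\<^sub>M borel)" by (rule g(1))
  have "(\<integral>\<omega>. f (gs j X0 \<omega> (Suc n)) \<partial>Q.S)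
      = (\<integral>p. f (gs j X0 (case_nat (fst p) (snd p)) (Suc n)) \<partial>((gauss \<Otimes>\<^sub>M gauss) \<Otimes>\<^sub>M Q.S))"
  proof -
    have "(\<integral>\<omega>. f (gs j X0 \<omega> (Suc n)) \<partial>Q.S) =
      (\<integral>\<omega>. f (gs j X0 \<omega> (Suc n)) \<partial>distr ((gauss \<Otimes>\<^sub>M gauss) \<Otimes>\<^sub>M Q.S) Q.S (\<lambda>p. case_nat (fst p) (snd p)))"
      using Q.PiM_iter by (simp add: case_prod_beta')
    also have "\<dots> = (\<integral>p. f (gs j X0 (case_nat (fst p) (snd p)) (Suc n)) \<partial>((gauss \<Otimes>\<^sub>M gauss) \<Otimes>\<^sub>M Q.S))"
      by (rule integral_distr) measurable
    finally show ?thesis .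
  qed
  also have "\<dots> = (\<integral>p. f (gs (Suc j) (step (tt j) X0 (fst p)) (snd p) n) \<partial>((gauss \<Otimes>\<^sub>M gauss) \<Otimes>\<^sub>M Q.S))"
    by (subst gs_first) simp
  also have "\<dots> = (\<integral>w. (\<integral>\<omega>. f (gs (Suc j) (step (tt j) X0 w) \<omega> n) \<partial>Q.S) \<partial>(gauss \<Otimes>\<^sub>M gauss))"
  proof -
    have "integrable ((gauss \<Otimes>\<^sub>M gauss) \<Otimes>\<^sub>M Q.S) (\<lambda>p. f (gs (Suc j) (step (tt j) X0 (fst p)) (snd p) n))"
    proof (intro MS.ibound(1)[where B=B])
      show "(\<lambda>p. f (gs (Suc j) (step (tt j) X0 (fst p)) (snd p) n)) \<in> borel_measurable ((gauss \<Otimes>\<^sub>M gauss) \<Otimes>\<^sub>M Q.S)"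
      proof -
        have fm: "fst \<in> measurable ((gauss \<Otimes>\<^sub>M gauss) \<Otimes>\<^sub>M Q.S) (borel \<Otimes>\<^sub>M borel)"
          by (subst measurable_cong_sets[of _ _ "borel \<Otimes>\<^sub>M borel" "gauss \<Otimes>\<^sub>M gauss"]) auto
        have sm: "snd \<in> measurable ((gauss \<Otimes>\<^sub>M gauss) \<Otimes>\<^sub>M Q.S) Q.S" by simp
        have cm: "(\<lambda>p. X0) \<in> measurable ((gauss \<Otimes>\<^sub>M gauss) \<Otimes>\<^sub>M Q.S) (borel \<Otimes>\<^sub>M borel)"
          by (simp add: space_pair_measure)
        show ?thesis using step_meas[OF cm fm] sm by measurable
      qed
    qed (use g(4) in auto)
    from MS.integral_fst'[OF this] show ?thesis by simp
  qed
  also have "\<dots> = H j (Suc n) f X0"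
    using Suc by (simp add: P_def)
  finally show ?case .
qed

end


context schemeL begin

definition f1 :: "nat \<Rightarrow> real \<times> real \<Rightarrow> real" where "f1 k x = v1 (tt k) (snd x)"
definition f2 :: "nat \<Rightarrow> real \<times> real \<Rightarrow> real" where "f2 k x = v2 (tt k) (fst (S1 (tt k) x))"

lemma f1_good: "good V1 (f1 k)" "mean (f1 k) = 0"
proof -
  show "good V1 (f1 k)" unfolding good_def f1_def by (auto simp: v1per v1b)
  show "mean (f1 k) = 0" unfolding mean_def f1_def by (simp add: v1mean)
qed

lemma f2_good: "good V2 (f2 k)" "mean (f2 k) = 0"
proof -
  have g: "good V2 (\<lambda>x. v2 (tt k) (fst x))" unfolding good_def by (auto simp: v2per v2b)
  have m: "mean (\<lambda>x. v2 (tt k) (fst x)) = 0" unfolding mean_def by (simp add: v2mean)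
  show "good V2 (f2 k)" using good_S1[OF g] unfolding f2_def by simp
  show "mean (f2 k) = 0" using mean_S1[OF g] m unfolding f2_def by simp
qed

lemma gs_fst: "fst (gs j X0 \<omega> (Suc n)) = fst (gs j X0 \<omega> n) + dt * f1 (j + n) (gs j X0 \<omega> n) + s * fst (\<omega> n)"
  by (simp add: step_def S1_def S2_def f1_def)
lemma gs_snd: "snd (gs j X0 \<omega> (Suc n)) = snd (gs j X0 \<omega> n) + dt * f2 (j + n) (gs j X0 \<omega> n) + s * snd (\<omega> n)"
  by (simp add: step_def S1_def S2_def f2_def)

lemma V_nonneg: "0 \<le> V1" "0 \<le> V2" using v1b[of 0 0] v2b[of 0 0] by auto

lemma gs_bound:
  "\<bar>fst (gs j X0 \<omega> n)\<bar> + \<bar>snd (gs j X0 \<omega> n)\<bar> \<le>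
     \<bar>fst X0\<bar> + \<bar>snd X0\<bar> + real n * ((V1 + V2) * dt) + s * (\<Sum>k<n. \<bar>fst (\<omega> k)\<bar> + \<bar>snd (\<omega> k)\<bar>)"
proof (induction n)
  case (Suc n)
  have a: "\<bar>dt * f1 (j + n) (gs j X0 \<omega> n)\<bar> \<le> V1 * dt"
    using v1b dt unfolding f1_def by (simp add: abs_mult mult.commute mult_right_mono)
  have b: "\<bar>dt * f2 (j + n) (gs j X0 \<omega> n)\<bar> \<le> V2 * dt"
    using v2b dt unfolding f2_def by (simp add: abs_mult mult.commute mult_right_mono)
  have c: "\<bar>s * fst (\<omega> n)\<bar> = s * \<bar>fst (\<omega> n)\<bar>" "\<bar>s * snd (\<omega> n)\<bar> = s * \<bar>snd (\<omega> n)\<bar>"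
    using s by (auto simp: abs_mult)
  have t1: "\<bar>fst (gs j X0 \<omega> (Suc n))\<bar> \<le> \<bar>fst (gs j X0 \<omega> n)\<bar> + V1 * dt + s * \<bar>fst (\<omega> n)\<bar>"
    unfolding gs_fst using a c(1) abs_triangle_ineq[of "fst (gs j X0 \<omega> n) + dt * f1 (j + n) (gs j X0 \<omega> n)" "s * fst (\<omega> n)"]
      abs_triangle_ineq[of "fst (gs j X0 \<omega> n)" "dt * f1 (j + n) (gs j X0 \<omega> n)"] by linarith
  have t2: "\<bar>snd (gs j X0 \<omega> (Suc n))\<bar> \<le> \<bar>snd (gs j X0 \<omega> n)\<bar> + V2 * dt + s * \<bar>snd (\<omega> n)\<bar>"
    unfolding gs_snd using b c(2) abs_triangle_ineq[of "snd (gs j X0 \<omega> n) + dt * f2 (j + n) (gs j X0 \<omega> n)" "s * snd (\<omega> n)"]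
      abs_triangle_ineq[of "snd (gs j X0 \<omega> n)" "dt * f2 (j + n) (gs j X0 \<omega> n)"] by linarith
  have e: "real (Suc n) * ((V1 + V2) * dt) + s * (\<Sum>k<Suc n. \<bar>fst (\<omega> k)\<bar> + \<bar>snd (\<omega> k)\<bar>)
     = real n * ((V1 + V2) * dt) + s * (\<Sum>k<n. \<bar>fst (\<omega> k)\<bar> + \<bar>snd (\<omega> k)\<bar>) + (V1 * dt + s * \<bar>fst (\<omega> n)\<bar>) + (V2 * dt + s * \<bar>snd (\<omega> n)\<bar>)"
    by (simp add: distrib_left distrib_right)
  show ?case using Suc.IH t1 t2 e by linarith
qed simp

lemma integrable_gs:
  "integrable Q.S (\<lambda>\<omega>. fst (gs j X0 \<omega> n))" "integrable Q.S (\<lambda>\<omega>. snd (gs j X0 \<omega> n))"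
proof -
  define R where "R \<omega> = \<bar>fst X0\<bar> + \<bar>snd X0\<bar> + real n * ((V1 + V2) * dt) + s * (\<Sum>k<n. \<bar>fst (\<omega> k)\<bar> + \<bar>snd (\<omega> k)\<bar>)" for \<omega>
  have ib: "integrable Q.S R"
    unfolding R_def using noise_moments by (intro Bochner_Integration.integrable_add integrable_mult_right integrable_sum integrable_abs) auto
  have b1: "norm (fst (gs j X0 \<omega> n)) \<le> norm (R \<omega>)" for \<omega>
  proof -
    have "\<bar>fst (gs j X0 \<omega> n)\<bar> \<le> R \<omega>" unfolding R_def
      using gs_bound[of j X0 \<omega> n] abs_ge_zero[of "snd (gs j X0 \<omega> n)"] by linarith
    then show ?thesis by (metis real_norm_def abs_ge_self order_trans)
  qed
  have b2: "norm (snd (gs j X0 \<omega> n)) \<le> norm (R \<omega>)" for \<omega>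
  proof -
    have "\<bar>snd (gs j X0 \<omega> n)\<bar> \<le> R \<omega>" unfolding R_def
      using gs_bound[of j X0 \<omega> n] abs_ge_zero[of "fst (gs j X0 \<omega> n)"] by linarith
    then show ?thesis by (metis real_norm_def abs_ge_self order_trans)
  qed
  show "integrable Q.S (\<lambda>\<omega>. fst (gs j X0 \<omega> n))"
    by (rule Bochner_Integration.integrable_bound[OF ib]) (use b1 in auto)
  show "integrable Q.S (\<lambda>\<omega>. snd (gs j X0 \<omega> n))"
    by (rule Bochner_Integration.integrable_bound[OF ib]) (use b2 in auto)
qed

lemma E_fst: "(\<integral>\<omega>. fst (gs 0 X0 \<omega> n) \<partial>Q.S) = fst X0 + dt * (\<Sum>k<n. H 0 k (f1 k) X0)"
proof (induction n)
  case (Suc n)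
  have i1: "integrable Q.S (\<lambda>\<omega>. dt * f1 n (gs 0 X0 \<omega> n))"
    using goodD(4)[OF f1_good(1)] by (intro integrable_mult_right Q.P.ibound(1)[where B=V1]) (auto simp: f1_def)
  have "(\<integral>\<omega>. fst (gs 0 X0 \<omega> (Suc n)) \<partial>Q.S) =
     (\<integral>\<omega>. fst (gs 0 X0 \<omega> n) \<partial>Q.S) + (\<integral>\<omega>. dt * f1 n (gs 0 X0 \<omega> n) \<partial>Q.S) + (\<integral>\<omega>. s * fst (\<omega> n) \<partial>Q.S)"
    unfolding gs_fst using integrable_gs i1 noise_moments by simp
  also have "\<dots> = fst X0 + dt * (\<Sum>k<Suc n. H 0 k (f1 k) X0)"
    using Suc noise_moments E_H[OF f1_good(1)] by (simp add: algebra_simps)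
  finally show ?case .
qed (simp add: Q.P.prob_space)

lemma E_snd: "(\<integral>\<omega>. snd (gs 0 X0 \<omega> n) \<partial>Q.S) = snd X0 + dt * (\<Sum>k<n. H 0 k (f2 k) X0)"
proof (induction n)
  case (Suc n)
  have i1: "integrable Q.S (\<lambda>\<omega>. dt * f2 n (gs 0 X0 \<omega> n))"
    using goodD(1,4)[OF f2_good(1)] by (intro integrable_mult_right Q.P.ibound(1)[where B=V2]) auto
  have "(\<integral>\<omega>. snd (gs 0 X0 \<omega> (Suc n)) \<partial>Q.S) =
     (\<integral>\<omega>. snd (gs 0 X0 \<omega> n) \<partial>Q.S) + (\<integral>\<omega>. dt * f2 n (gs 0 X0 \<omega> n) \<partial>Q.S) + (\<integral>\<omega>. s * snd (\<omega> n) \<partial>Q.S)"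
    unfolding gs_snd using integrable_gs i1 noise_moments by simp
  also have "\<dots> = snd X0 + dt * (\<Sum>k<Suc n. H 0 k (f2 k) X0)"
    using Suc noise_moments E_H[OF f2_good(1)] by (simp add: algebra_simps)
  finally show ?case .
qed (simp add: Q.P.prob_space)

end


lemma vprops:
  fixes v :: "real \<Rightarrow> real \<Rightarrow> real"
  assumes sm: "smooth2 v" and pt: "\<And>t x. v (t + 1) x = v t x" and px: "\<And>t x. v t (x + 1) = v t x"
    and mz: "\<And>t. integral {0..1} (\<lambda>x. v t x) = 0"
  shows "\<And>t. v t \<in> borel_measurable borel" "\<And>t x. \<bar>v t x\<bar> \<le> supnorm2 v" "\<And>t. (\<integral>x. v t x \<partial>U) = 0"
proof -
  have cv: "continuous_on UNIV (\<lambda>p. v (fst p) (snd p))"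
    using sm by (cases rule: smooth2.cases) auto
  have ct: "continuous_on UNIV (v t)" for t
  proof -
    have "continuous_on UNIV (Pair t :: real \<Rightarrow> real \<times> real)" by (intro continuous_intros)
    then show ?thesis using continuous_on_compose2[OF cv, of UNIV "\<lambda>y. (t, y)"] by auto
  qed
  show "v t \<in> borel_measurable borel" for t by (rule borel_measurable_continuous_onI[OF ct])
  have "compact ((\<lambda>p. v (fst p) (snd p)) ` ({0..1} \<times> {0..1}))"
    by (intro compact_continuous_image continuous_on_subset[OF cv] compact_Times) auto
  then obtain M where M0: "\<forall>y\<in>(\<lambda>p. v (fst p) (snd p)) ` ({0..1} \<times> {0..1}). \<bar>y\<bar> \<le> M"
    by (metis compact_imp_bounded bounded_real)
  then have M: "\<And>p. p \<in> {0..1} \<times> {0..1} \<Longrightarrow> \<bar>v (fst p) (snd p)\<bar> \<le> M" by blast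
  have red: "v t x = v (t - of_int \<lfloor>t\<rfloor>) (x - of_int \<lfloor>x\<rfloor>)" for t x
  proof -
    have "v t x = v (t - of_int \<lfloor>t\<rfloor>) x"
      using periodic_int[of "\<lambda>t. v t x", OF pt, of "t - of_int \<lfloor>t\<rfloor>" "\<lfloor>t\<rfloor>"] by simp
    also have "\<dots> = v (t - of_int \<lfloor>t\<rfloor>) (x - of_int \<lfloor>x\<rfloor>)"
      using periodic_int[of "\<lambda>x. v (t - of_int \<lfloor>t\<rfloor>) x", OF px, of "x - of_int \<lfloor>x\<rfloor>" "\<lfloor>x\<rfloor>"] by simp
    finally show ?thesis .
  qed
  have vb: "\<bar>v t x\<bar> \<le> M" for t x
  proof -
    have "0 \<le> t - of_int \<lfloor>t\<rfloor>" "t - of_int \<lfloor>t\<rfloor> \<le> 1" "0 \<le> x - of_int \<lfloor>x\<rfloor>" "x - of_int \<lfloor>x\<rfloor> \<le> 1"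
      by linarith+
    then show ?thesis using M[of "(t - of_int \<lfloor>t\<rfloor>, x - of_int \<lfloor>x\<rfloor>)"] red[of t x] by simp
  qed
  have bdd: "bdd_above ((\<lambda>p. \<bar>v (fst p) (snd p)\<bar>) ` UNIV)"
    using vb by (auto intro!: bdd_aboveI)
  show "\<bar>v t x\<bar> \<le> supnorm2 v" for t x
    unfolding supnorm2_def using cSUP_upper[OF _ bdd, of "(t, x)"] by simp
  show "(\<integral>x. v t x \<partial>U) = 0" for t
  proof -
    have m[measurable]: "v t \<in> borel_measurable borel" by (rule borel_measurable_continuous_onI[OF ct])
    have "(\<integral>x. v t x \<partial>U) = (\<integral>x. indicator {0..<1} x * v t x \<partial>lborel)"
      by (rule integral_U) simp
    also have "\<dots> = (LINT x:{0..1}|lborel. v t x)"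
      unfolding set_lebesgue_integral_def
      using AE_lborel_singleton[of 1] by (intro integral_cong_AE) (auto simp: indicator_def)
    also have "\<dots> = integral {0..1} (\<lambda>x. v t x)"
      by (rule set_borel_integral_eq_integral(2)[OF borel_integrable_atLeastAtMost'])
         (rule continuous_on_subset[OF ct], simp)
    finally show ?thesis using mz by simp
  qed
qed



lemma geom_le:
  fixes q :: real assumes "0 \<le> q" "q < 1"
  shows "(\<Sum>k<n. q^k) \<le> 1 / (1 - q)"
proof -
  have "(\<Sum>k<n. q^k) = (1 - q^n) / (1 - q)" using assms by (simp add: sum_gp_strict)
  also have "\<dots> \<le> 1 / (1 - q)" using assms by (intro divide_right_mono) auto
  finally show ?thesis .
qed

context schemeL begin

lemma chain_bounds:
  assumes pm: "prob_space \<mu>" and sm: "sets \<mu> = sets borel" and i1: "integrable \<mu> fst" and i2: "integrable \<mu> snd"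
  shows "\<bar>\<integral>p. fst (gs 0 (fst p) (snd p) n) \<partial>(\<mu> \<Otimes>\<^sub>M Q.S)\<bar> \<le> \<bar>\<integral>x. fst x \<partial>\<mu>\<bar> + dt / c * V1"
    and "\<bar>\<integral>p. snd (gs 0 (fst p) (snd p) n) \<partial>(\<mu> \<Otimes>\<^sub>M Q.S)\<bar> \<le> \<bar>\<integral>x. snd x \<partial>\<mu>\<bar> + dt / c * V2"
proof -
  interpret M: prob_space \<mu> by (rule pm)
  interpret MQ: pair_prob_space \<mu> Q.S by unfold_locales
  have sm2: "sets \<mu> = sets (borel \<Otimes>\<^sub>M borel)" unfolding borel_prod using sm by simp
  have fm: "fst \<in> measurable (\<mu> \<Otimes>\<^sub>M Q.S) (borel \<Otimes>\<^sub>M borel)"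
    using measurable_fst[of \<mu> Q.S] measurable_cong_sets[OF refl sm2, of "\<mu> \<Otimes>\<^sub>M Q.S"] by simp
  have sn: "snd \<in> measurable (\<mu> \<Otimes>\<^sub>M Q.S) Q.S" by simp
  have gsm: "(\<lambda>p. gs 0 (fst p) (snd p) n) \<in> measurable (\<mu> \<Otimes>\<^sub>M Q.S) (borel \<Otimes>\<^sub>M borel)"
    by (rule gs_meas_raw[OF fm sn])
  have dfst: "distr (\<mu> \<Otimes>\<^sub>M Q.S) \<mu> fst = \<mu>" by (rule Q.P.distr_pair_fst)
  have dsnd: "distr (\<mu> \<Otimes>\<^sub>M Q.S) Q.S snd = Q.S"
  proof (intro measure_eqI)
    fix A assume A: "A \<in> sets (distr (\<mu> \<Otimes>\<^sub>M Q.S) Q.S snd)"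
    from A have "emeasure (distr (\<mu> \<Otimes>\<^sub>M Q.S) Q.S snd) A = emeasure (\<mu> \<Otimes>\<^sub>M Q.S) (space \<mu> \<times> A)"
      by (auto simp add: emeasure_distr space_pair_measure dest: sets.sets_into_space intro!: arg_cong2[where f=emeasure])
    with A show "emeasure (distr (\<mu> \<Otimes>\<^sub>M Q.S) Q.S snd) A = emeasure Q.S A"
      using Q.P.emeasure_pair_measure_Times[of "space \<mu>" \<mu> A] M.emeasure_space_1 by simp
  qed simp
  have mu_int: "integrable (\<mu> \<Otimes>\<^sub>M Q.S) (\<lambda>p. g (fst p))" if "integrable \<mu> g" "g \<in> borel_measurable \<mu>" for g :: "_ \<Rightarrow> real"
    using that integrable_distr_eq[of fst "\<mu> \<Otimes>\<^sub>M Q.S" \<mu> g] dfst by simp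
  have S_int: "integrable (\<mu> \<Otimes>\<^sub>M Q.S) (\<lambda>p. g (snd p))" if "integrable Q.S g" "g \<in> borel_measurable Q.S" for g :: "_ \<Rightarrow> real"
    using that integrable_distr_eq[of snd "\<mu> \<Otimes>\<^sub>M Q.S" Q.S g] dsnd by simp
  define R where "R p = \<bar>fst (fst p)\<bar> + \<bar>snd (fst p)\<bar> + real n * ((V1 + V2) * dt) + s * (\<Sum>k<n. \<bar>fst (snd p k)\<bar> + \<bar>snd (snd p k)\<bar>)" for p
  have ifst: "integrable (\<mu> \<Otimes>\<^sub>M Q.S) (\<lambda>p. \<bar>fst (fst p)\<bar>)"
    by (rule mu_int[of "\<lambda>x. \<bar>fst x\<bar>"]) (use i1 sm2 in auto)
  have isnd: "integrable (\<mu> \<Otimes>\<^sub>M Q.S) (\<lambda>p. \<bar>snd (fst p)\<bar>)"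
    by (rule mu_int[of "\<lambda>x. \<bar>snd x\<bar>"]) (use i2 sm2 in auto)
  have in1: "integrable (\<mu> \<Otimes>\<^sub>M Q.S) (\<lambda>p. \<bar>fst (snd p k)\<bar>)" for k
    by (rule S_int[of "\<lambda>\<omega>. \<bar>fst (\<omega> k)\<bar>"]) (use noise_moments in auto)
  have in2: "integrable (\<mu> \<Otimes>\<^sub>M Q.S) (\<lambda>p. \<bar>snd (snd p k)\<bar>)" for k
    by (rule S_int[of "\<lambda>\<omega>. \<bar>snd (\<omega> k)\<bar>"]) (use noise_moments in auto)
  have iR: "integrable (\<mu> \<Otimes>\<^sub>M Q.S) R"
    unfolding R_def using ifst isnd in1 in2
    by (intro Bochner_Integration.integrable_add integrable_mult_right integrable_sum) auto
  have b1: "norm (fst (gs 0 (fst p) (snd p) n)) \<le> norm (R p)" for p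
  proof -
    have "\<bar>fst (gs 0 (fst p) (snd p) n)\<bar> \<le> R p" unfolding R_def
      using gs_bound[of 0 "fst p" "snd p" n] abs_ge_zero[of "snd (gs 0 (fst p) (snd p) n)"] by linarith
    then show ?thesis by (metis real_norm_def abs_ge_self order_trans)
  qed
  have b2: "norm (snd (gs 0 (fst p) (snd p) n)) \<le> norm (R p)" for p
  proof -
    have "\<bar>snd (gs 0 (fst p) (snd p) n)\<bar> \<le> R p" unfolding R_def
      using gs_bound[of 0 "fst p" "snd p" n] abs_ge_zero[of "fst (gs 0 (fst p) (snd p) n)"] by linarith
    then show ?thesis by (metis real_norm_def abs_ge_self order_trans)
  qed
  have ig1: "integrable (\<mu> \<Otimes>\<^sub>M Q.S) (\<lambda>p. fst (gs 0 (fst p) (snd p) n))"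
    by (rule Bochner_Integration.integrable_bound[OF iR]) (use b1 gsm in auto)
  have ig2: "integrable (\<mu> \<Otimes>\<^sub>M Q.S) (\<lambda>p. snd (gs 0 (fst p) (snd p) n))"
    by (rule Bochner_Integration.integrable_bound[OF iR]) (use b2 gsm in auto)
  have Hb: "integrable \<mu> (H 0 k f) \<and> \<bar>\<integral>x. H 0 k f x \<partial>\<mu>\<bar> \<le> q^k * V" if "good V f" "mean f = 0" for f k V
  proof -
    note g = goodD[OF conjunct1[OF H_contract[OF that, of k 0]]]
    have [measurable]: "H 0 k f \<in> borel_measurable \<mu>" using g(1) sm2 by (simp cong: measurable_cong_sets)
    show ?thesis using M.ibound[of "H 0 k f" "q^k * V"] g(4) by auto
  qed
  have V: "0 \<le> V1" "0 \<le> V2" by (rule V_nonneg)+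
  have geo: "(\<Sum>k<n. q^k * V) \<le> V / c" if "0 \<le> V" for V
  proof -
    have "(\<Sum>k<n. q^k * V) = (\<Sum>k<n. q^k) * V" by (simp add: sum_distrib_right)
    also have "\<dots> \<le> 1 / (1 - q) * V" using geom_le[OF q_bounds] that by (intro mult_right_mono) auto
    also have "\<dots> = V / c" unfolding q_def by simp
    finally show ?thesis .
  qed
  have c: "0 < c" using c_pos by simp
  show "\<bar>\<integral>p. fst (gs 0 (fst p) (snd p) n) \<partial>(\<mu> \<Otimes>\<^sub>M Q.S)\<bar> \<le> \<bar>\<integral>x. fst x \<partial>\<mu>\<bar> + dt / c * V1"
  proof -
    have "(\<integral>p. fst (gs 0 (fst p) (snd p) n) \<partial>(\<mu> \<Otimes>\<^sub>M Q.S)) = (\<integral>x. (\<integral>\<omega>. fst (gs 0 x \<omega> n) \<partial>Q.S) \<partial>\<mu>)"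
      using MQ.integral_fst'[OF ig1] by simp
    also have "\<dots> = (\<integral>x. fst x + dt * (\<Sum>k<n. H 0 k (f1 k) x) \<partial>\<mu>)" by (simp add: E_fst)
    also have "\<dots> = (\<integral>x. fst x \<partial>\<mu>) + dt * (\<Sum>k<n. (\<integral>x. H 0 k (f1 k) x \<partial>\<mu>))"
      using i1 Hb[OF f1_good] by simp
    finally have e: "(\<integral>p. fst (gs 0 (fst p) (snd p) n) \<partial>(\<mu> \<Otimes>\<^sub>M Q.S)) = (\<integral>x. fst x \<partial>\<mu>) + dt * (\<Sum>k<n. (\<integral>x. H 0 k (f1 k) x \<partial>\<mu>))" .
    have "\<bar>\<Sum>k<n. (\<integral>x. H 0 k (f1 k) x \<partial>\<mu>)\<bar> \<le> (\<Sum>k<n. q^k * V1)"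
      using Hb[OF f1_good] by (intro order_trans[OF sum_abs] sum_mono) auto
    also have "\<dots> \<le> V1 / c" by (rule geo[OF V(1)])
    finally have "dt * \<bar>\<Sum>k<n. (\<integral>x. H 0 k (f1 k) x \<partial>\<mu>)\<bar> \<le> dt * (V1 / c)"
      using dt by (intro mult_left_mono) auto
    then show ?thesis unfolding e using dt by (auto simp: abs_mult intro!: order_trans[OF abs_triangle_ineq])
  qed
  show "\<bar>\<integral>p. snd (gs 0 (fst p) (snd p) n) \<partial>(\<mu> \<Otimes>\<^sub>M Q.S)\<bar> \<le> \<bar>\<integral>x. snd x \<partial>\<mu>\<bar> + dt / c * V2"
  proof -
    have "(\<integral>p. snd (gs 0 (fst p) (snd p) n) \<partial>(\<mu> \<Otimes>\<^sub>M Q.S)) = (\<integral>x. (\<integral>\<omega>. snd (gs 0 x \<omega> n) \<partial>Q.S) \<partial>\<mu>)"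
      using MQ.integral_fst'[OF ig2] by simp
    also have "\<dots> = (\<integral>x. snd x + dt * (\<Sum>k<n. H 0 k (f2 k) x) \<partial>\<mu>)" by (simp add: E_snd)
    also have "\<dots> = (\<integral>x. snd x \<partial>\<mu>) + dt * (\<Sum>k<n. (\<integral>x. H 0 k (f2 k) x \<partial>\<mu>))"
      using i2 Hb[OF f2_good] by simp
    finally have e: "(\<integral>p. snd (gs 0 (fst p) (snd p) n) \<partial>(\<mu> \<Otimes>\<^sub>M Q.S)) = (\<integral>x. snd x \<partial>\<mu>) + dt * (\<Sum>k<n. (\<integral>x. H 0 k (f2 k) x \<partial>\<mu>))" .
    have "\<bar>\<Sum>k<n. (\<integral>x. H 0 k (f2 k) x \<partial>\<mu>)\<bar> \<le> (\<Sum>k<n. q^k * V2)"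
      using Hb[OF f2_good] by (intro order_trans[OF sum_abs] sum_mono) auto
    also have "\<dots> \<le> V2 / c" by (rule geo[OF V(2)])
    finally have "dt * \<bar>\<Sum>k<n. (\<integral>x. H 0 k (f2 k) x \<partial>\<mu>)\<bar> \<le> dt * (V2 / c)"
      using dt by (intro mult_left_mono) auto
    then show ?thesis unfolding e using dt by (auto simp: abs_mult intro!: order_trans[OF abs_triangle_ineq])
  qed
qed

end


theorem mainTheorem3:
  fixes \<sigma> :: real and N :: nat and v1 v2 :: "real \<Rightarrow> real \<Rightarrow> real"
  assumes "\<sigma> > 0" and "N \<ge> 1"
    and "smooth2 v1" and "smooth2 v2"
    and "\<And>t x. v1 (t + 1) x = v1 t x" and "\<And>t x. v1 t (x + 1) = v1 t x"
    and "\<And>t x. v2 (t + 1) x = v2 t x" and "\<And>t x. v2 t (x + 1) = v2 t x"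
    and "\<And>t. integral {0..1} (\<lambda>x2. v1 t x2) = 0"
    and "\<And>t. integral {0..1} (\<lambda>x1. v2 t x1) = 0"
  shows "\<exists>C1::real. \<forall>\<mu> :: (real \<times> real) measure.
           prob_space \<mu> \<and> sets \<mu> = sets borel \<and> integrable \<mu> fst \<and> integrable \<mu> snd \<longrightarrow>
           (\<forall>n. \<bar>\<integral>p. fst (scheme v1 v2 \<sigma> N (fst p) (snd p) n) \<partial>chain_space \<mu>\<bar>
                  \<le> \<bar>\<integral>x. fst x \<partial>\<mu>\<bar> + C1 * supnorm2 v1
              \<and> \<bar>\<integral>p. snd (scheme v1 v2 \<sigma> N (fst p) (snd p) n) \<partial>chain_space \<mu>\<bar>
                  \<le> \<bar>\<integral>x. snd x \<partial>\<mu>\<bar> + C1 * supnorm2 v2)"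
proof -
  define dt where "dt = 1 / real N"
  define s where "s = \<sigma> * sqrt dt"
  have dt: "dt > 0" using assms(2) by (simp add: dt_def)
  have s: "s > 0" using assms(1) dt by (simp add: s_def)
  note p1 = vprops[OF assms(3) assms(5) assms(6) assms(9)]
  note p2 = vprops[OF assms(4) assms(7) assms(8) assms(10)]
  interpret L: schemeL v1 v2 dt s "supnorm2 v1" "supnorm2 v2"
    by unfold_locales (use dt s p1 p2 assms(6,8) in auto)
  have sch: "scheme v1 v2 \<sigma> N X0 \<omega> n = L.gs 0 X0 \<omega> n" for X0 \<omega> n
  proof (induction n)
    case (Suc n)
    have e: "1 / real N = dt" "\<sigma> * sqrt dt = s" by (simp_all add: dt_def s_def)
    show ?case
      by (simp only: scheme.simps L.gs.simps Suc Let_def e) (simp add: L.step_def L.S1_def L.S2_def L.tt_def split: prod.splits)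
  qed simp
  show ?thesis
  proof (intro exI[of _ "dt / L.c"] allI impI)
    fix \<mu> :: "(real \<times> real) measure" and n
    assume \<mu>: "prob_space \<mu> \<and> sets \<mu> = sets borel \<and> integrable \<mu> fst \<and> integrable \<mu> snd"
    then show "\<bar>\<integral>p. fst (scheme v1 v2 \<sigma> N (fst p) (snd p) n) \<partial>chain_space \<mu>\<bar>
                  \<le> \<bar>\<integral>x. fst x \<partial>\<mu>\<bar> + dt / L.c * supnorm2 v1
              \<and> \<bar>\<integral>p. snd (scheme v1 v2 \<sigma> N (fst p) (snd p) n) \<partial>chain_space \<mu>\<bar>
                  \<le> \<bar>\<integral>x. snd x \<partial>\<mu>\<bar> + dt / L.c * supnorm2 v2"
      unfolding chain_space_def noise_space_eq sch using L.chain_bounds[of \<mu> n] by auto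
  qed
qed


end
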